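(* Let $G$ be a group and $L,N$ normal subgroups with $L\geqslant N$ and $N\geqslant[G,L]$. For $\nu\in\mathrm{Q}(N)^G$ the following are equivalent: (1) $\nu$ is extendable to $L$, i.e. $\nu=\psi|_N$ for some $\psi\in\mathrm{Q}(L)^G$; (2) $\mathscr{D}^t_{G,L}(\nu)<\infty$ for every $t\in\mathbb{N}$; (3) $\mathscr{D}^t_{G,L}(\nu)<\infty$ for some $t\in\mathbb{N}$; (4) $\mathscr{D}^1_{G,L}(\nu)=\mathscr{D}(\nu)$; (5) $\mathscr{D}^1_{G,L}(\nu)<\infty$.
   Context: $[g,h]=ghg^{-1}h^{-1}$. $\mathscr{D}(\nu)=\sup_{x_1,x_2\in N}|\nu(x_1x_2)-\nu(x_1)-\nu(x_2)|$. $\mathrm{Q}(N)^G$ (resp. $\mathrm{Q}(L)^G$): homogeneous quasimorphisms on $N$ (resp. $L$) invariant under conjugation by $G$. For $t\in\mathbb{N}$, $\mathscr{D}^t_{G,L}(\nu)=\sup\{|\nu([g_1,g_1']\cdots[g_t,g_t'])|: g_1,\dots,g_t\in G,\ g_1',\dots,g_t'\in L\}\in[0,\infty]$ (these products lie in $N$ since $N\geqslant[G,L]$). *)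

theory Defs
  imports Complex_Main "HOL-Algebra.Group" "HOL-Algebra.Coset" "HOL-Library.Extended_Real"
begin

definition commut :: "('a, 'b) monoid_scheme \<Rightarrow> 'a \<Rightarrow> 'a \<Rightarrow> 'a" where
  "commut G g h = g \<otimes>\<^bsub>G\<^esub> h \<otimes>\<^bsub>G\<^esub> inv\<^bsub>G\<^esub> g \<otimes>\<^bsub>G\<^esub> inv\<^bsub>G\<^esub> h"

definition defect :: "('a, 'b) monoid_scheme \<Rightarrow> 'a set \<Rightarrow> ('a \<Rightarrow> real) \<Rightarrow> ereal" where
  "defect G H \<nu> = (SUP p \<in> H \<times> H.
      ereal \<bar>\<nu> (fst p \<otimes>\<^bsub>G\<^esub> snd p) - \<nu> (fst p) - \<nu> (snd p)\<bar>)"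

definition hqm :: "('a, 'b) monoid_scheme \<Rightarrow> 'a set \<Rightarrow> ('a \<Rightarrow> real) \<Rightarrow> bool" where
  "hqm G H \<nu> \<longleftrightarrow> defect G H \<nu> < \<infinity> \<and>
      (\<forall>x\<in>H. \<forall>n::int. \<nu> (x [^]\<^bsub>G\<^esub> n) = of_int n * \<nu> x)"

definition hqm_inv :: "('a, 'b) monoid_scheme \<Rightarrow> 'a set \<Rightarrow> ('a \<Rightarrow> real) \<Rightarrow> bool" where
  "hqm_inv G H \<nu> \<longleftrightarrow> hqm G H \<nu> \<and>
      (\<forall>g\<in>carrier G. \<forall>x\<in>H. \<nu> (g \<otimes>\<^bsub>G\<^esub> x \<otimes>\<^bsub>G\<^esub> inv\<^bsub>G\<^esub> g) = \<nu> x)"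

fun comm_prod :: "('a, 'b) monoid_scheme \<Rightarrow> (nat \<Rightarrow> 'a) \<Rightarrow> (nat \<Rightarrow> 'a) \<Rightarrow> nat \<Rightarrow> 'a" where
  "comm_prod G g l 0 = \<one>\<^bsub>G\<^esub>"
| "comm_prod G g l (Suc n) = comm_prod G g l n \<otimes>\<^bsub>G\<^esub> commut G (g n) (l n)"

definition Dt :: "('a, 'b) monoid_scheme \<Rightarrow> 'a set \<Rightarrow> nat \<Rightarrow> ('a \<Rightarrow> real) \<Rightarrow> ereal" where
  "Dt G L t \<nu> = Sup {ereal \<bar>\<nu> (comm_prod G g l t)\<bar> | g l.
      (\<forall>i<t. g i \<in> carrier G) \<and> (\<forall>i<t. l i \<in> L)}"

end

theory Submission
  imports Defs "HOL-Algebra.Generated_Groups"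
begin

context group begin

lemma gc1 [simp]: "a \<in> carrier G \<Longrightarrow> b \<in> carrier G \<Longrightarrow> a \<otimes> (inv a \<otimes> b) = b"
  by (simp add: m_assoc[symmetric])
lemma gc2 [simp]: "a \<in> carrier G \<Longrightarrow> b \<in> carrier G \<Longrightarrow> inv a \<otimes> (a \<otimes> b) = b"
  by (simp add: m_assoc[symmetric])

lemma bav_id:
  assumes x: "x \<in> carrier G" and y: "y \<in> carrier G"
  shows "x [^] (n+2::nat) \<otimes> y [^] (n+2::nat) \<otimes> inv ((x \<otimes> y) [^] (n+2::nat)) =
    (x [^] n \<otimes> commut G (x [^] (2::nat) \<otimes> y) (y [^] n \<otimes> inv x) \<otimes> inv (x [^] n)) \<otimes>
    (x [^] n \<otimes> y [^] n \<otimes> inv ((x \<otimes> y) [^] n))"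
proof -
  have e1: "x [^] (n+2::nat) = x [^] n \<otimes> (x \<otimes> x)" using x by (simp add: m_assoc)
  have e2: "y [^] (n+2::nat) = y \<otimes> (y [^] n \<otimes> y)" using y
    by (metis add_2_eq_Suc' nat_pow_Suc nat_pow_Suc2 nat_pow_closed m_assoc)
  have e3: "(x \<otimes> y) [^] (n+2::nat) = (x \<otimes> y) [^] n \<otimes> (x \<otimes> y \<otimes> (x \<otimes> y))" using x y by (simp add: m_assoc)
  have e4: "x [^] (2::nat) = x \<otimes> x" using x by (simp add: numeral_2_eq_2)
  show ?thesis unfolding e1 e2 e3 e4 commut_def using x y
    by (simp add: m_assoc inv_mult_group)
qed

lemma comm_pow_id:
  assumes g: "g \<in> carrier G" and l: "l \<in> carrier G"
  shows "commut G g (l [^] Suc n) = commut G g (l [^] n) \<otimes> (l [^] n \<otimes> commut G g l \<otimes> inv (l [^] n))"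
  unfolding commut_def using g l by (simp add: m_assoc inv_mult_group)

end


locale hqmloc = group G for G (structure) +
  fixes H :: "'a set" and \<phi> :: "'a \<Rightarrow> real" and D :: real
  assumes sub: "subgroup H G"
    and hom: "\<forall>x\<in>H. \<forall>n::int. \<phi> (x [^] n) = of_int n * \<phi> x"
    and cinv: "\<forall>g\<in>carrier G. \<forall>x\<in>H. \<phi> (g \<otimes> x \<otimes> inv g) = \<phi> x"
    and qm: "\<forall>x\<in>H. \<forall>y\<in>H. \<bar>\<phi> (x \<otimes> y) - \<phi> x - \<phi> y\<bar> \<le> D"
begin

lemma Hc: "x \<in> H \<Longrightarrow> x \<in> carrier G" using subgroup.subset[OF sub] by auto
lemma Hm: "x \<in> H \<Longrightarrow> y \<in> H \<Longrightarrow> x \<otimes> y \<in> H" by (rule subgroup.m_closed[OF sub])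
lemma Hi: "x \<in> H \<Longrightarrow> inv x \<in> H" by (rule subgroup.m_inv_closed[OF sub])
lemma H1: "\<one> \<in> H" by (rule subgroup.one_closed[OF sub])
lemma Hpi: "x \<in> H \<Longrightarrow> x [^] (n::int) \<in> H" by (rule subgroup_int_pow_closed[OF sub])
lemma Hp: "x \<in> H \<Longrightarrow> x [^] (n::nat) \<in> H" using Hpi[of x "int n"] by (simp add: int_pow_int)

lemma phi_one: "\<phi> \<one> = 0"
  using hom H1 by (metis int_pow_0 mult_zero_left of_int_0)
lemma phi_inv: "x \<in> H \<Longrightarrow> \<phi> (inv x) = - \<phi> x"
  using hom Hc by (metis int_pow_1 int_pow_neg mult_minus1 of_int_1 of_int_minus)
lemma phi_nat: "x \<in> H \<Longrightarrow> \<phi> (x [^] (n::nat)) = real n * \<phi> x"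
  using hom by (metis int_pow_int of_int_of_nat_eq)
lemma D_nonneg: "0 \<le> D" using qm H1 by fastforce

lemma bav_half:
  assumes C: "\<forall>a\<in>H. \<forall>b\<in>H. \<bar>\<phi> (commut G a b)\<bar> \<le> C"
    and x: "x \<in> H" and y: "y \<in> H"
  shows "\<bar>\<phi> (x \<otimes> y) - \<phi> x - \<phi> y\<bar> \<le> (C + D) / 2"
proof -
  have xc: "x \<in> carrier G" and yc: "y \<in> carrier G" using x y Hc by auto
  define w where "w n = x [^] n \<otimes> y [^] n \<otimes> inv ((x \<otimes> y) [^] (n::nat))" for n
  have wH: "w n \<in> H" for n unfolding w_def using x y by (intro Hm Hi Hp) auto
  have step: "\<bar>\<phi> (w (n+2)) - \<phi> (w n)\<bar> \<le> C + D" for n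
  proof -
    define k where "k = commut G (x [^] (2::nat) \<otimes> y) (y [^] n \<otimes> inv x)"
    have kH: "k \<in> H" unfolding k_def commut_def using x y by (intro Hm Hi Hp) auto
    have ck: "\<bar>\<phi> k\<bar> \<le> C" unfolding k_def using C x y by (simp add: Hm Hi Hp)
    define c where "c = x [^] n \<otimes> k \<otimes> inv (x [^] n)"
    have cH: "c \<in> H" unfolding c_def using kH x by (intro Hm Hi Hp) auto
    have pc: "\<phi> c = \<phi> k" unfolding c_def using cinv kH xc by simp
    have "w (n+2) = c \<otimes> w n" unfolding w_def c_def k_def using bav_id[OF xc yc] by simp
    then have "\<bar>\<phi> (w (n+2)) - \<phi> c - \<phi> (w n)\<bar> \<le> D" using qm cH wH by simp
    then show ?thesis using pc ck by linarith
  qed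
  have ind: "\<bar>\<phi> (w (2*m))\<bar> \<le> real m * (C + D)" for m
  proof (induction m)
    case 0 then show ?case unfolding w_def using phi_one xc yc by simp
  next
    case (Suc m)
    have "2 * Suc m = 2*m + 2" by simp
    then show ?case using step[of "2*m"] Suc.IH by (simp add: algebra_simps)
  qed
  have rel: "\<bar>\<phi> (w n) + real n * (\<phi> (x \<otimes> y) - \<phi> x - \<phi> y)\<bar> \<le> 2 * D" for n
  proof -
    have a: "\<bar>\<phi> (x [^] n \<otimes> y [^] n \<otimes> inv ((x \<otimes> y) [^] n)) - \<phi> (x [^] n \<otimes> y [^] n) - \<phi> (inv ((x \<otimes> y) [^] n))\<bar> \<le> D"
      using qm x y by (simp add: Hm Hi Hp)
    have b: "\<bar>\<phi> (x [^] n \<otimes> y [^] n) - \<phi> (x [^] n) - \<phi> (y [^] n)\<bar> \<le> D"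
      using qm x y by (simp add: Hm Hi Hp)
    have c: "\<phi> (inv ((x \<otimes> y) [^] n)) = - (real n * \<phi> (x \<otimes> y))"
      using x y by (simp add: phi_inv phi_nat Hm Hp)
    show ?thesis using a b c x y unfolding w_def by (simp add: phi_nat algebra_simps)
  qed
  define \<delta> where "\<delta> = \<bar>\<phi> (x \<otimes> y) - \<phi> x - \<phi> y\<bar>"
  have key: "real m * (2 * \<delta>) \<le> real m * (C + D) + 2 * D" for m
  proof -
    have "real (2*m) * \<delta> \<le> \<bar>\<phi> (w (2*m))\<bar> + 2 * D"
      using rel[of "2*m"] unfolding \<delta>_def by (simp add: abs_mult)
    then show ?thesis using ind[of m] by simp
  qed
  show ?thesis
  proof (rule ccontr)
    assume "\<not> ?thesis"
    then have pos: "2 * \<delta> - (C + D) > 0" unfolding \<delta>_def by simp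
    obtain m :: nat where m: "real m > 2 * D / (2 * \<delta> - (C + D))" using reals_Archimedean2 by blast
    then have "real m * (2 * \<delta> - (C + D)) > 2 * D" using pos by (simp add: field_simps)
    then show False using key[of m] by (simp add: algebra_simps)
  qed
qed

end

lemma bavard:
  assumes "hqmloc G H \<phi> D"
    and C: "\<forall>a\<in>H. \<forall>b\<in>H. \<bar>\<phi> (commut G a b)\<bar> \<le> C"
    and x: "x \<in> H" and y: "y \<in> H"
  shows "\<bar>\<phi> (x \<otimes>\<^bsub>G\<^esub> y) - \<phi> x - \<phi> y\<bar> \<le> C"
proof -
  have all: "hqmloc G H \<phi> (C + (D - C) / 2 ^ k)" for k
  proof (induction k)
    case 0 then show ?case using assms(1) by simp
  next
    case (Suc k)
    interpret h: hqmloc G H \<phi> "C + (D - C) / 2 ^ k" by (rule Suc.IH)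
    have q: "\<forall>x\<in>H. \<forall>y\<in>H. \<bar>\<phi> (x \<otimes>\<^bsub>G\<^esub> y) - \<phi> x - \<phi> y\<bar> \<le> C + (D - C) / 2 ^ Suc k"
    proof (intro ballI)
      fix x y assume xy: "x \<in> H" "y \<in> H"
      have "\<bar>\<phi> (x \<otimes>\<^bsub>G\<^esub> y) - \<phi> x - \<phi> y\<bar> \<le> (C + (C + (D - C) / 2 ^ k)) / 2"
        by (rule h.bav_half[OF C xy])
      also have "\<dots> = C + (D - C) / 2 ^ Suc k" by (simp add: field_simps)
      finally show "\<bar>\<phi> (x \<otimes>\<^bsub>G\<^esub> y) - \<phi> x - \<phi> y\<bar> \<le> C + (D - C) / 2 ^ Suc k" .
    qed
    show ?case
      apply (rule hqmloc.intro[OF h.group_axioms hqmloc_axioms.intro])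
      using h.sub h.hom h.cinv q by auto
  qed
  show ?thesis
  proof (rule ccontr)
    assume "\<not> ?thesis"
    then have e: "\<bar>\<phi> (x \<otimes>\<^bsub>G\<^esub> y) - \<phi> x - \<phi> y\<bar> - C > 0" by simp
    obtain k :: nat where k: "(1/2) ^ k < (\<bar>\<phi> (x \<otimes>\<^bsub>G\<^esub> y) - \<phi> x - \<phi> y\<bar> - C) / (\<bar>D - C\<bar> + 1)"
      using real_arch_pow_inv[of "(\<bar>\<phi> (x \<otimes>\<^bsub>G\<^esub> y) - \<phi> x - \<phi> y\<bar> - C) / (\<bar>D - C\<bar> + 1)" "1/2"] e
      by (auto simp: divide_pos_pos)
    have "(D - C) / 2 ^ k \<le> (\<bar>D - C\<bar> + 1) * (1/2) ^ k"
    proof -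
      have "(D - C) / 2 ^ k \<le> (\<bar>D - C\<bar> + 1) / 2 ^ k" by (rule divide_right_mono) auto
      also have "\<dots> = (\<bar>D - C\<bar> + 1) * (1/2) ^ k" by (simp add: power_divide)
      finally show ?thesis .
    qed
    also have "\<dots> < \<bar>\<phi> (x \<otimes>\<^bsub>G\<^esub> y) - \<phi> x - \<phi> y\<bar> - C"
      using k by (smt (verit) mult.commute pos_less_divide_eq)
    finally show False using hqmloc.qm[OF all[of k]] x y by fastforce
  qed
qed

lemma close_lim:
  fixes a b :: "nat \<Rightarrow> real"
  assumes a: "a \<longlonglongrightarrow> A" and b: "\<And>k. \<bar>b k - a k\<bar> \<le> c / 2 ^ k"
  shows "b \<longlonglongrightarrow> A"
proof (rule Lim_transform[OF a])
  have z: "(\<lambda>k. c / 2 ^ k :: real) \<longlonglongrightarrow> 0" by (rule LIMSEQ_divide_realpow_zero) simp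
  show "(\<lambda>k. b k - a k) \<longlonglongrightarrow> 0"
  proof (rule tendsto_0_le[OF z, where K=1], rule always_eventually, rule allI)
    fix k
    have "c / 2 ^ k \<le> \<bar>c\<bar> / 2 ^ k" by (rule divide_right_mono) auto
    then show "norm (b k - a k) \<le> norm (c / 2 ^ k) * 1" using b[of k] by (simp add: abs_divide)
  qed
qed

lemma LU: "X \<longlonglongrightarrow> (a::real) \<Longrightarrow> X \<longlonglongrightarrow> b \<Longrightarrow> b = a" by (metis LIMSEQ_unique)

lemma div_bound:
  fixes u v p B :: real
  assumes "\<bar>u - p * v\<bar> \<le> B"
  shows "\<bar>u / 2 ^ k - p * (v / 2 ^ k)\<bar> \<le> B / 2 ^ k"
proof -
  have "u / 2 ^ k - p * (v / 2 ^ k) = (u - p * v) / 2 ^ k" by (simp add: diff_divide_distrib)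
  then show ?thesis using assms by (simp add: abs_divide divide_right_mono)
qed

locale qmloc = group G for G (structure) +
  fixes H :: "'a set" and f :: "'a \<Rightarrow> real" and K :: real
  assumes sub: "subgroup H G"
    and qm: "\<forall>x\<in>H. \<forall>y\<in>H. \<bar>f (x \<otimes> y) - f x - f y\<bar> \<le> K"
begin

lemma Hc: "x \<in> H \<Longrightarrow> x \<in> carrier G" using subgroup.subset[OF sub] by auto
lemma Hm: "x \<in> H \<Longrightarrow> y \<in> H \<Longrightarrow> x \<otimes> y \<in> H" by (rule subgroup.m_closed[OF sub])
lemma Hi: "x \<in> H \<Longrightarrow> inv x \<in> H" by (rule subgroup.m_inv_closed[OF sub])
lemma H1: "\<one> \<in> H" by (rule subgroup.one_closed[OF sub])
lemma Hpi: "x \<in> H \<Longrightarrow> x [^] (n::int) \<in> H" by (rule subgroup_int_pow_closed[OF sub])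
lemma Hp: "x \<in> H \<Longrightarrow> x [^] (n::nat) \<in> H" using Hpi[of x "int n"] by (simp add: int_pow_int)

lemma K_nonneg: "0 \<le> K" using qm H1 by (metis abs_ge_zero order_trans)

lemma qm2: "x \<in> H \<Longrightarrow> y \<in> H \<Longrightarrow> \<bar>f (x \<otimes> y) - f x - f y\<bar> \<le> K" using qm by blast

lemma f_one: "\<bar>f \<one>\<bar> \<le> K" using qm2[OF H1 H1] by simp

lemma f_pow: "x \<in> H \<Longrightarrow> \<bar>f (x [^] p) - real p * f x\<bar> \<le> (real p + 1) * K"
proof (induction p)
  case 0 then show ?case using f_one by simp
next
  case (Suc p)
  have "\<bar>f (x [^] p \<otimes> x) - f (x [^] p) - f x\<bar> \<le> K" using qm2[OF Hp[OF Suc.prems] Suc.prems] by simp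
  then show ?case using Suc by (simp add: algebra_simps)
qed

lemma f_inv: "x \<in> H \<Longrightarrow> \<bar>f (inv x) + f x\<bar> \<le> 2 * K"
proof -
  assume x: "x \<in> H"
  have "\<bar>f (inv x \<otimes> x) - f (inv x) - f x\<bar> \<le> K" using qm2[OF Hi[OF x] x] by simp
  then show ?thesis using x Hc f_one by simp
qed

definition s :: "'a \<Rightarrow> nat \<Rightarrow> real" where "s x k = f (x [^] (2 ^ k :: nat)) / 2 ^ k"
definition hz :: "'a \<Rightarrow> real" where "hz x = lim (s x)"

lemma s_step: "x \<in> H \<Longrightarrow> \<bar>s x (Suc k) - s x k\<bar> \<le> K / 2 ^ Suc k"
proof -
  assume x: "x \<in> H"
  have e: "x [^] (2 ^ Suc k :: nat) = x [^] (2 ^ k :: nat) \<otimes> x [^] (2 ^ k :: nat)"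
    using x Hc by (simp add: nat_pow_mult mult_2)
  have "\<bar>f (x [^] (2 ^ Suc k :: nat)) - 2 * f (x [^] (2 ^ k :: nat))\<bar> \<le> K"
    unfolding e using qm2[OF Hp[OF x, of "2^k::nat"] Hp[OF x, of "2^k::nat"]] by linarith
  then have "\<bar>f (x [^] (2 ^ Suc k :: nat)) - 2 * f (x [^] (2 ^ k :: nat))\<bar> / 2 ^ Suc k \<le> K / 2 ^ Suc k"
    by (simp add: divide_right_mono)
  moreover have "\<bar>f (x [^] (2 ^ Suc k :: nat)) - 2 * f (x [^] (2 ^ k :: nat))\<bar> / 2 ^ Suc k = \<bar>s x (Suc k) - s x k\<bar>"
    unfolding s_def by (simp add: field_simps abs_divide)
  ultimately show ?thesis by simp
qed

lemma s_conv: "x \<in> H \<Longrightarrow> s x \<longlonglongrightarrow> hz x"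
proof -
  assume x: "x \<in> H"
  define d where "d k = s x (Suc k) - s x k" for k
  have "summable (\<lambda>k. K / 2 * (1/2) ^ k)" by (intro summable_mult summable_geometric) simp
  then have sd: "summable d"
    by (rule summable_comparison_test'[where N=0]) (use s_step[OF x] in \<open>simp add: d_def power_divide\<close>)
  have "(\<lambda>n. s x 0 + (\<Sum>i<n. d i)) \<longlonglongrightarrow> s x 0 + suminf d"
    by (intro tendsto_add tendsto_const summable_LIMSEQ sd)
  moreover have "(\<lambda>n. s x 0 + (\<Sum>i<n. d i)) = s x" unfolding d_def sum_lessThan_telescope by auto
  ultimately have "s x \<longlonglongrightarrow> s x 0 + suminf d" by simp
  then show ?thesis unfolding hz_def by (simp add: convergentI convergent_LIMSEQ_iff limI)
qed

lemma s_bound: "x \<in> H \<Longrightarrow> \<bar>s x k - f x\<bar> \<le> K - K / 2 ^ k"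
proof (induction k)
  case 0 then show ?case unfolding s_def using Hc by simp
next
  case (Suc k)
  have "K - K / 2 ^ k + K / 2 ^ Suc k = K - K / 2 ^ Suc k" by (simp add: field_simps)
  then show ?case using Suc s_step[OF Suc.prems, of k] by linarith
qed

lemma hz_close: "x \<in> H \<Longrightarrow> \<bar>hz x - f x\<bar> \<le> K"
proof -
  assume x: "x \<in> H"
  have "(\<lambda>k. \<bar>s x k - f x\<bar>) \<longlonglongrightarrow> \<bar>hz x - f x\<bar>" by (intro tendsto_intros s_conv x)
  moreover have "\<forall>k\<ge>0. \<bar>s x k - f x\<bar> \<le> K"
    using s_bound[OF x] K_nonneg by (smt (verit) divide_nonneg_pos zero_less_power)
  ultimately show ?thesis by (intro LIMSEQ_le_const2[where X="\<lambda>k. \<bar>s x k - f x\<bar>"]) auto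
qed

lemma hz_qm: "x \<in> H \<Longrightarrow> y \<in> H \<Longrightarrow> \<bar>hz (x \<otimes> y) - hz x - hz y\<bar> \<le> 4 * K"
  using hz_close[of x] hz_close[of y] hz_close[of "x \<otimes> y"] qm2[of x y] Hm[of x y] by linarith

lemma hz_pow: "x \<in> H \<Longrightarrow> hz (x [^] (p::nat)) = real p * hz x"
proof -
  assume x: "x \<in> H"
  have a: "(\<lambda>k. real p * s x k) \<longlonglongrightarrow> real p * hz x" by (intro tendsto_intros s_conv x)
  have b: "\<bar>s (x [^] p) k - real p * s x k\<bar> \<le> (real p + 1) * K / 2 ^ k" for k
  proof -
    have e: "(x [^] p) [^] (2 ^ k :: nat) = (x [^] (2 ^ k :: nat)) [^] p"
      using x Hc by (simp add: nat_pow_pow mult.commute)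
    have "\<bar>f ((x [^] (2 ^ k :: nat)) [^] p) - real p * f (x [^] (2 ^ k :: nat))\<bar> \<le> (real p + 1) * K"
      by (rule f_pow) (use x Hp in auto)
    then show ?thesis unfolding s_def e by (rule div_bound)
  qed
  have "s (x [^] p) \<longlonglongrightarrow> real p * hz x" by (rule close_lim[OF a b])
  moreover have "s (x [^] p) \<longlonglongrightarrow> hz (x [^] p)" by (rule s_conv) (use x Hp in auto)
  ultimately show ?thesis by (rule LU)
qed

lemma hz_inv: "x \<in> H \<Longrightarrow> hz (inv x) = - hz x"
proof -
  assume x: "x \<in> H"
  have a: "(\<lambda>k. - s x k) \<longlonglongrightarrow> - hz x" by (intro tendsto_intros s_conv x)
  have b: "\<bar>s (inv x) k - (- s x k)\<bar> \<le> 2 * K / 2 ^ k" for k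
  proof -
    have e: "(inv x) [^] (2 ^ k :: nat) = inv (x [^] (2 ^ k :: nat))"
      using x Hc by (simp add: nat_pow_inv)
    have "\<bar>f (inv (x [^] (2 ^ k :: nat))) + f (x [^] (2 ^ k :: nat))\<bar> \<le> 2 * K"
      by (rule f_inv) (use x Hp in auto)
    then show ?thesis unfolding s_def e using div_bound[of _ "-1"] by simp
  qed
  have "s (inv x) \<longlonglongrightarrow> - hz x" by (rule close_lim[OF a b])
  moreover have "s (inv x) \<longlonglongrightarrow> hz (inv x)" by (rule s_conv) (use x Hi in auto)
  ultimately show ?thesis by (rule LU)
qed

lemma hz_ipow: "x \<in> H \<Longrightarrow> hz (x [^] (n::int)) = of_int n * hz x"
proof (cases "n \<ge> 0")
  case True
  assume x: "x \<in> H"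
  have e: "x [^] n = x [^] (nat n)" using pow_nat[OF True, of G x] by (rule sym)
  have "hz (x [^] (nat n)) = real (nat n) * hz x" by (rule hz_pow[OF x])
  also have "real (nat n) = of_int n" using True by simp
  finally show ?thesis unfolding e .
next
  case False
  assume x: "x \<in> H"
  have e: "x [^] n = inv (x [^] (nat (- n)))" proof -
    have "n < 0" using False by simp
    then show ?thesis using int_pow_def2[of G x n] by (simp only: if_True)
  qed
  have "hz (inv (x [^] (nat (- n)))) = - hz (x [^] (nat (- n)))" by (rule hz_inv) (use x Hp in auto)
  also have "hz (x [^] (nat (- n))) = real (nat (- n)) * hz x" by (rule hz_pow[OF x])
  also have "real (nat (- n)) = - of_int n" using False by simp
  finally show ?thesis unfolding e by simp
qed

lemma hz_eq:
  assumes x: "x \<in> H" and y: "y \<in> H" and B: "\<And>n::nat. \<bar>f (x [^] n) - f (y [^] n)\<bar> \<le> B"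
  shows "hz x = hz y"
proof -
  have b: "\<bar>s x k - s y k\<bar> \<le> B / 2 ^ k" for k
    unfolding s_def using B[of "2^k"] div_bound[of _ 1] by simp
  have "s x \<longlonglongrightarrow> hz y" by (rule close_lim[OF s_conv[OF y] b])
  then show ?thesis using s_conv[OF x] LU by blast
qed

lemma hz_exact:
  assumes x: "x \<in> H" and e: "\<And>n::nat. f (x [^] n) = real n * f x"
  shows "hz x = f x"
proof -
  have "s x = (\<lambda>k. f x)" unfolding s_def using e by (auto simp: field_simps)
  then have "s x \<longlonglongrightarrow> f x" by simp
  then show ?thesis using s_conv[OF x] LU by blast
qed

end

lemma (in group) conj_pow:
  "g \<in> carrier G \<Longrightarrow> x \<in> carrier G \<Longrightarrow> (g \<otimes> x \<otimes> inv g) [^] (n::nat) = g \<otimes> x [^] n \<otimes> inv g"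
proof (induction n)
  case 0 then show ?case by simp
next
  case (Suc n) then show ?case by (simp add: m_assoc)
qed

lemma defect_ub:
  assumes "x \<in> H" "y \<in> H"
  shows "ereal \<bar>\<phi> (x \<otimes>\<^bsub>G\<^esub> y) - \<phi> x - \<phi> y\<bar> \<le> defect G H \<phi>"
  unfolding defect_def using assms by (intro SUP_upper2[of "(x,y)"]) auto

lemma defect_lub:
  assumes "\<And>x y. x \<in> H \<Longrightarrow> y \<in> H \<Longrightarrow> \<bar>\<phi> (x \<otimes>\<^bsub>G\<^esub> y) - \<phi> x - \<phi> y\<bar> \<le> c"
  shows "defect G H \<phi> \<le> ereal c"
  unfolding defect_def using assms by (intro SUP_least) auto

lemma defect_real:
  assumes "defect G H \<phi> < \<infinity>" "x \<in> H" "y \<in> H"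
  shows "\<bar>\<phi> (x \<otimes>\<^bsub>G\<^esub> y) - \<phi> x - \<phi> y\<bar> \<le> real_of_ereal (defect G H \<phi>)"
proof -
  have a: "ereal \<bar>\<phi> (x \<otimes>\<^bsub>G\<^esub> y) - \<phi> x - \<phi> y\<bar> \<le> defect G H \<phi>" by (rule defect_ub) (use assms in auto)
  then have "defect G H \<phi> \<noteq> - \<infinity>" by auto
  then have "defect G H \<phi> = ereal (real_of_ereal (defect G H \<phi>))" using assms(1) by (cases "defect G H \<phi>") auto
  then show ?thesis using a by (metis ereal_less_eq(3))
qed

lemma comm_prod_1: "comm_prod G g l (Suc 0) = \<one>\<^bsub>G\<^esub> \<otimes>\<^bsub>G\<^esub> commut G (g 0) (l 0)" by simp

locale setting = group G for G (structure) +
  fixes L N :: "'a set" and \<nu> :: "'a \<Rightarrow> real"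
  assumes Lnorm: "L \<lhd> G" and Nnorm: "N \<lhd> G" and NL: "N \<subseteq> L"
    and comm: "\<forall>g\<in>carrier G. \<forall>l\<in>L. commut G g l \<in> N"
    and hq: "hqm_inv G N \<nu>"
begin

lemma Lsub: "subgroup L G" using Lnorm normal_imp_subgroup by blast
lemma Nsub: "subgroup N G" using Nnorm normal_imp_subgroup by blast
lemma Lc: "x \<in> L \<Longrightarrow> x \<in> carrier G" using subgroup.subset[OF Lsub] by auto
lemma Nc: "x \<in> N \<Longrightarrow> x \<in> carrier G" using subgroup.subset[OF Nsub] by auto
lemma commC: "g \<in> carrier G \<Longrightarrow> l \<in> carrier G \<Longrightarrow> commut G g l \<in> carrier G"
  unfolding commut_def by simp
lemma commN: "g \<in> carrier G \<Longrightarrow> l \<in> L \<Longrightarrow> commut G g l \<in> N" using comm by blast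

lemma Ndef: "defect G N \<nu> < \<infinity>" using hq unfolding hqm_inv_def hqm_def by blast
lemma Nhom: "\<forall>x\<in>N. \<forall>n::int. \<nu> (x [^] n) = of_int n * \<nu> x" using hq unfolding hqm_inv_def hqm_def by blast
lemma Ninv: "\<forall>g\<in>carrier G. \<forall>x\<in>N. \<nu> (g \<otimes> x \<otimes> inv g) = \<nu> x" using hq unfolding hqm_inv_def by blast

definition "Dn = real_of_ereal (defect G N \<nu>)"

lemma Nqm: "x \<in> N \<Longrightarrow> y \<in> N \<Longrightarrow> \<bar>\<nu> (x \<otimes> y) - \<nu> x - \<nu> y\<bar> \<le> Dn"
  unfolding Dn_def by (rule defect_real[OF Ndef])

lemma phi_one_N: "\<nu> \<one> = 0"
  using spec[OF bspec[OF Nhom subgroup.one_closed[OF Nsub]], of 0] by simp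

lemma Nloc: "hqmloc G N \<nu> Dn"
  by (rule hqmloc.intro[OF group_axioms hqmloc_axioms.intro]) (use Nsub Nhom Ninv Nqm in auto)

lemma normal_mid: assumes "subgroup M G" "N \<subseteq> M" "M \<subseteq> L" "g \<in> carrier G" "m \<in> M"
  shows "g \<otimes> m \<otimes> inv g \<in> M"
proof -
  have mc: "m \<in> carrier G" using assms subgroup.subset by blast
  have "g \<otimes> m \<otimes> inv g = commut G g m \<otimes> m" unfolding commut_def using mc assms(4) by (simp add: m_assoc)
  moreover have "commut G g m \<in> M" using commN assms by blast
  ultimately show ?thesis using assms subgroup.m_closed by metis
qed

lemma Dt1_ub:
  assumes "g \<in> carrier G" "l \<in> L"
  shows "ereal \<bar>\<nu> (commut G g l)\<bar> \<le> Dt G L 1 \<nu>"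
proof -
  have "comm_prod G (\<lambda>_. g) (\<lambda>_. l) 1 = commut G g l" using assms commC Lc by simp
  then show ?thesis unfolding Dt_def using assms by (intro Sup_upper) force
qed

lemma Dt1_lub:
  assumes "\<And>g l. g \<in> carrier G \<Longrightarrow> l \<in> L \<Longrightarrow> \<bar>\<nu> (commut G g l)\<bar> \<le> c"
  shows "Dt G L 1 \<nu> \<le> ereal c"
  unfolding Dt_def
proof (rule Sup_least)
  fix y assume "y \<in> {ereal \<bar>\<nu> (comm_prod G g l 1)\<bar> | g l. (\<forall>i<1. g i \<in> carrier G) \<and> (\<forall>i<1. l i \<in> L)}"
  then obtain g l where y: "y = ereal \<bar>\<nu> (comm_prod G g l 1)\<bar>" and g: "g 0 \<in> carrier G" and l: "l 0 \<in> L" by auto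
  have "comm_prod G g l 1 = commut G (g 0) (l 0)" using g l commC Lc by simp
  then show "y \<le> ereal c" using y assms[OF g l] by simp
qed

lemma cp_single:
  assumes "a \<in> carrier G" "b \<in> carrier G"
  shows "comm_prod G (\<lambda>i. if i = 0 then a else \<one>) (\<lambda>i. if i = 0 then b else \<one>) (Suc k) = commut G a b"
proof (induction k)
  case 0 then show ?case using assms commC by simp
next
  case (Suc k) then show ?case using assms commC by (simp add: commut_def)
qed

lemma Dt_mono:
  assumes "t \<ge> 1"
  shows "Dt G L 1 \<nu> \<le> Dt G L t \<nu>"
  unfolding Dt_def
proof (rule Sup_least)
  fix y assume "y \<in> {ereal \<bar>\<nu> (comm_prod G g l 1)\<bar> | g l. (\<forall>i<1. g i \<in> carrier G) \<and> (\<forall>i<1. l i \<in> L)}"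
  then obtain g l where y: "y = ereal \<bar>\<nu> (comm_prod G g l 1)\<bar>" and g: "g 0 \<in> carrier G" and l: "l 0 \<in> L" by auto
  have e1: "comm_prod G g l 1 = commut G (g 0) (l 0)" using g l commC Lc by simp
  obtain k where k: "t = Suc k" using assms by (cases t) auto
  define g' where "g' = (\<lambda>i::nat. if i = 0 then g 0 else \<one>)"
  define l' where "l' = (\<lambda>i::nat. if i = 0 then l 0 else \<one>)"
  have e2: "comm_prod G g' l' t = commut G (g 0) (l 0)" unfolding g'_def l'_def k
    by (rule cp_single) (use g l Lc in auto)
  have mem: "(\<forall>i<t. g' i \<in> carrier G) \<and> (\<forall>i<t. l' i \<in> L)"
    unfolding g'_def l'_def using g l subgroup.one_closed[OF Lsub] by auto
  show "y \<le> Sup {ereal \<bar>\<nu> (comm_prod G g l t)\<bar> | g l. (\<forall>i<t. g i \<in> carrier G) \<and> (\<forall>i<t. l i \<in> L)}"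
  proof (rule Sup_upper)
    have yy: "y = ereal \<bar>\<nu> (comm_prod G g' l' t)\<bar>" using y e1 e2 by simp
    show "y \<in> {ereal \<bar>\<nu> (comm_prod G g l t)\<bar> | g l. (\<forall>i<t. g i \<in> carrier G) \<and> (\<forall>i<t. l i \<in> L)}"
      using yy mem by blast
  qed
qed

lemma ext_imp_Dt:
  assumes psi: "hqm_inv G L \<psi>" and ext: "\<forall>x\<in>N. \<psi> x = \<nu> x"
  shows "Dt G L t \<nu> < \<infinity>"
proof -
  have Ldef: "defect G L \<psi> < \<infinity>" using psi unfolding hqm_inv_def hqm_def by blast
  have Lhom: "\<forall>x\<in>L. \<forall>n::int. \<psi> (x [^] n) = of_int n * \<psi> x" using psi unfolding hqm_inv_def hqm_def by blast
  have Linv: "\<forall>g\<in>carrier G. \<forall>x\<in>L. \<psi> (g \<otimes> x \<otimes> inv g) = \<psi> x" using psi unfolding hqm_inv_def by blast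
  define E where "E = real_of_ereal (defect G L \<psi>)"
  have Lqm: "x \<in> L \<Longrightarrow> y \<in> L \<Longrightarrow> \<bar>\<psi> (x \<otimes> y) - \<psi> x - \<psi> y\<bar> \<le> E" for x y
    unfolding E_def by (rule defect_real[OF Ldef])
  have E0: "0 \<le> E" using Lqm[of \<one> \<one>] subgroup.one_closed[OF Lsub] by simp
  have psi_inv: "x \<in> L \<Longrightarrow> \<psi> (inv x) = - \<psi> x" for x
  proof -
    assume xL: "x \<in> L"
    have "\<psi> (x [^] (- 1::int)) = of_int (- 1) * \<psi> x" using spec[OF bspec[OF Lhom xL], of "- 1"] .
    then show ?thesis using Lc[OF xL] by (simp add: int_pow_neg)
  qed
  have cb: "\<bar>\<psi> (commut G g l)\<bar> \<le> E" if g: "g \<in> carrier G" and l: "l \<in> L" for g l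
  proof -
    have c: "commut G g l = (g \<otimes> l \<otimes> inv g) \<otimes> inv l" unfolding commut_def by simp
    have m: "g \<otimes> l \<otimes> inv g \<in> L" using normal.inv_op_closed2[OF Lnorm g l] .
    have il: "inv l \<in> L" using l subgroup.m_inv_closed[OF Lsub] by blast
    have "\<bar>\<psi> ((g \<otimes> l \<otimes> inv g) \<otimes> inv l) - \<psi> (g \<otimes> l \<otimes> inv g) - \<psi> (inv l)\<bar> \<le> E" by (rule Lqm[OF m il])
    then show ?thesis unfolding c using Linv g l psi_inv[OF l] by simp
  qed
  have ind: "(\<forall>i<k. g i \<in> carrier G \<and> l i \<in> L) \<longrightarrow> comm_prod G g l k \<in> N \<and> \<bar>\<nu> (comm_prod G g l k)\<bar> \<le> 2 * real k * E" for g l k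
  proof (induction k)
    case 0 then show ?case using subgroup.one_closed[OF Nsub] phi_one_N by simp
  next
    case (Suc k)
    show ?case
    proof
      assume a: "\<forall>i<Suc k. g i \<in> carrier G \<and> l i \<in> L"
      then have P: "comm_prod G g l k \<in> N" and Pb: "\<bar>\<nu> (comm_prod G g l k)\<bar> \<le> 2 * real k * E" using Suc by auto
      have c: "commut G (g k) (l k) \<in> N" using a commN by simp
      have cb': "\<bar>\<nu> (commut G (g k) (l k))\<bar> \<le> E" using cb[of "g k" "l k"] a ext c by simp
      have PL: "comm_prod G g l k \<in> L" using P NL by blast
      have cL: "commut G (g k) (l k) \<in> L" using c NL by blast
      have PcN: "comm_prod G g l k \<otimes> commut G (g k) (l k) \<in> N" by (rule subgroup.m_closed[OF Nsub P c])
      have "\<bar>\<psi> (comm_prod G g l k \<otimes> commut G (g k) (l k)) - \<psi> (comm_prod G g l k) - \<psi> (commut G (g k) (l k))\<bar> \<le> E"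
        by (rule Lqm[OF PL cL])
      then have "\<bar>\<nu> (comm_prod G g l k \<otimes> commut G (g k) (l k)) - \<nu> (comm_prod G g l k) - \<nu> (commut G (g k) (l k))\<bar> \<le> E"
        using ext P c PcN by simp
      then show "comm_prod G g l (Suc k) \<in> N \<and> \<bar>\<nu> (comm_prod G g l (Suc k))\<bar> \<le> 2 * real (Suc k) * E"
        using P c Pb cb' subgroup.m_closed[OF Nsub P c] by (simp add: algebra_simps)
    qed
  qed
  have "Dt G L t \<nu> \<le> ereal (2 * real t * E)"
    unfolding Dt_def
  proof (rule Sup_least)
    fix y assume "y \<in> {ereal \<bar>\<nu> (comm_prod G g l t)\<bar> | g l. (\<forall>i<t. g i \<in> carrier G) \<and> (\<forall>i<t. l i \<in> L)}"
    then obtain g l where y: "y = ereal \<bar>\<nu> (comm_prod G g l t)\<bar>" and gl: "\<forall>i<t. g i \<in> carrier G \<and> l i \<in> L" by auto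
    then show "y \<le> ereal (2 * real t * E)" using ind[of t g l] by simp
  qed
  then show ?thesis by (rule order_le_less_trans) simp
qed

lemma comm_bound:
  assumes C: "\<And>g l. g \<in> carrier G \<Longrightarrow> l \<in> L \<Longrightarrow> \<bar>\<nu> (commut G g l)\<bar> \<le> C"
    and g: "g \<in> carrier G" and l: "l \<in> L"
  shows "\<bar>\<nu> (commut G g l)\<bar> \<le> Dn"
proof -
  have lc: "l \<in> carrier G" using l Lc by simp
  define c where "c = commut G g l"
  have cN: "c \<in> N" unfolding c_def using commN g l by simp
  have lp: "l [^] (n::nat) \<in> L" for n using l subgroup_int_pow_closed[OF Lsub l, of "int n"] by (simp add: int_pow_int)
  have ind: "\<bar>\<nu> (commut G g (l [^] n)) - real n * \<nu> c\<bar> \<le> real n * Dn" for n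
  proof (induction n)
    case 0 then show ?case using phi_one_N g by (simp add: commut_def)
  next
    case (Suc n)
    have P: "commut G g (l [^] n) \<in> N" using commN g lp by simp
    have Q: "l [^] n \<otimes> c \<otimes> inv (l [^] n) \<in> N" using normal.inv_op_closed2[OF Nnorm _ cN] lc by simp
    have Qv: "\<nu> (l [^] n \<otimes> c \<otimes> inv (l [^] n)) = \<nu> c" using Ninv cN lc by simp
    have e: "commut G g (l [^] Suc n) = commut G g (l [^] n) \<otimes> (l [^] n \<otimes> c \<otimes> inv (l [^] n))"
      unfolding c_def by (rule comm_pow_id[OF g lc])
    show ?case unfolding e using Nqm[OF P Q] Qv Suc.IH by (simp add: algebra_simps)
  qed
  have key: "real n * \<bar>\<nu> c\<bar> \<le> C + real n * Dn" for n
  proof -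
    have "\<bar>\<nu> (commut G g (l [^] n))\<bar> \<le> C" using C g lp by blast
    then show ?thesis using ind[of n] by (simp add: abs_mult)
  qed
  show ?thesis unfolding c_def[symmetric]
  proof (rule ccontr)
    assume "\<not> \<bar>\<nu> c\<bar> \<le> Dn"
    then have pos: "\<bar>\<nu> c\<bar> - Dn > 0" by simp
    obtain n :: nat where n: "real n > C / (\<bar>\<nu> c\<bar> - Dn)" using reals_Archimedean2 by blast
    then have "real n * (\<bar>\<nu> c\<bar> - Dn) > C" using pos by (simp add: field_simps)
    then show False using key[of n] by (simp add: algebra_simps)
  qed
qed

end

context setting begin

definition good :: "real \<Rightarrow> 'a set \<Rightarrow> ('a \<Rightarrow> real) \<Rightarrow> bool" where
  "good C M \<psi> \<longleftrightarrow> subgroup M G \<and> N \<subseteq> M \<and> M \<subseteq> L \<and> (\<forall>x\<in>N. \<psi> x = \<nu> x) \<and>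
     (\<forall>x\<in>M. \<forall>n::int. \<psi> (x [^] n) = of_int n * \<psi> x) \<and>
     (\<forall>g\<in>carrier G. \<forall>x\<in>M. \<psi> (g \<otimes> x \<otimes> inv g) = \<psi> x) \<and>
     (\<forall>x\<in>M. \<forall>y\<in>M. \<bar>\<psi> (x \<otimes> y) - \<psi> x - \<psi> y\<bar> \<le> C)"

lemma good_loc: "good C M \<psi> \<Longrightarrow> hqmloc G M \<psi> C"
  by (rule hqmloc.intro[OF group_axioms hqmloc_axioms.intro]) (auto simp: good_def)

end

locale extctx = setting +
  fixes C :: real and M :: "'a set" and \<psi> :: "'a \<Rightarrow> real" and x :: 'a
  assumes hC: "\<And>g l. g \<in> carrier G \<Longrightarrow> l \<in> L \<Longrightarrow> \<bar>\<nu> (commut G g l)\<bar> \<le> C"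
    and gd: "good C M \<psi>" and xL: "x \<in> L" and xM: "x \<notin> M"
begin

sublocale hM: hqmloc G M \<psi> C by (rule good_loc[OF gd])

lemma Msub: "subgroup M G" using gd unfolding good_def by auto
lemma NM: "N \<subseteq> M" using gd unfolding good_def by auto
lemma MsL: "M \<subseteq> L" using gd unfolding good_def by auto
lemma ext: "\<forall>y\<in>N. \<psi> y = \<nu> y" using gd unfolding good_def by auto

lemma xc: "x \<in> carrier G" using xL Lc by simp
lemma conjM: "g \<in> carrier G \<Longrightarrow> m \<in> M \<Longrightarrow> g \<otimes> m \<otimes> inv g \<in> M" by (rule normal_mid[OF Msub NM MsL])
lemma xpL: "x [^] (j::int) \<in> L" by (rule subgroup_int_pow_closed[OF Lsub xL])
lemma xpc: "x [^] (j::int) \<in> carrier G" using xc by simp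

definition "M' = {m \<otimes> x [^] (j::int) | m j. m \<in> M}"

lemma M'c: "M' \<subseteq> carrier G" unfolding M'_def using hM.Hc xc by auto

lemma M'sub: "subgroup M' G"
proof (rule subgroupI[OF M'c])
  have "\<one> \<otimes> x [^] (0::int) \<in> M'" unfolding M'_def using hM.H1 by blast
  then show "M' \<noteq> {}" by blast
next
  fix a assume "a \<in> M'"
  then obtain m j where a: "a = m \<otimes> x [^] (j::int)" and m: "m \<in> M" unfolding M'_def by blast
  have mc: "m \<in> carrier G" using hM.Hc[OF m] .
  define b where "b = inv (x [^] j)"
  have bc: "b \<in> carrier G" unfolding b_def using xc by simp
  have b': "b = x [^] (- j)" unfolding b_def using xc by (simp add: int_pow_neg)
  have "inv a = (b \<otimes> inv m \<otimes> inv b) \<otimes> b" unfolding a b_def using mc xc by (simp add: inv_mult_group m_assoc)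
  moreover have "b \<otimes> inv m \<otimes> inv b \<in> M" using conjM[OF bc hM.Hi[OF m]] .
  ultimately show "inv a \<in> M'" unfolding M'_def b' by blast
next
  fix a b assume "a \<in> M'" "b \<in> M'"
  then obtain m i m' j where a: "a = m \<otimes> x [^] (i::int)" and m: "m \<in> M"
    and b: "b = m' \<otimes> x [^] (j::int)" and m': "m' \<in> M" unfolding M'_def by blast
  have "a \<otimes> b = (m \<otimes> (x [^] i \<otimes> m' \<otimes> inv (x [^] i))) \<otimes> x [^] (i + j)"
    unfolding a b using hM.Hc[OF m] hM.Hc[OF m'] xc by (simp add: int_pow_mult m_assoc)
  moreover have "m \<otimes> (x [^] i \<otimes> m' \<otimes> inv (x [^] i)) \<in> M" using hM.Hm[OF m conjM[OF xpc m']] .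
  ultimately show "a \<otimes> b \<in> M'" unfolding M'_def by blast
qed

lemma MM': "M \<subseteq> M'"
proof
  fix m assume m: "m \<in> M"
  then have "m = m \<otimes> x [^] (0::int)" using hM.Hc by simp
  then show "m \<in> M'" unfolding M'_def using m by blast
qed

lemma M'L: "M' \<subseteq> L"
proof
  fix y assume "y \<in> M'"
  then obtain m j where y: "y = m \<otimes> x [^] (j::int)" and m: "m \<in> M" unfolding M'_def by blast
  have "m \<in> L" using m MsL by blast
  then show "y \<in> L" unfolding y using subgroup.m_closed[OF Lsub _ xpL] by simp
qed

lemma xM': "x \<in> M'"
proof -
  have "x = \<one> \<otimes> x [^] (1::int)" using xc by simp
  then show ?thesis unfolding M'_def using hM.H1 by blast
qed

definition "k0 = (if \<exists>k::nat. k > 0 \<and> x [^] k \<in> M then (LEAST k::nat. k > 0 \<and> x [^] k \<in> M) else 0)"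

lemma k0_prop: "k0 > 0 \<Longrightarrow> x [^] k0 \<in> M"
proof -
  assume "k0 > 0"
  then have ex: "\<exists>k::nat. k > 0 \<and> x [^] k \<in> M" unfolding k0_def by (auto split: if_splits)
  then have "k0 = (LEAST k::nat. k > 0 \<and> x [^] k \<in> M)" unfolding k0_def by simp
  then show ?thesis using LeastI_ex[OF ex] by simp
qed

lemma k0_min: "0 < k \<Longrightarrow> k < k0 \<Longrightarrow> x [^] (k::nat) \<notin> M"
proof -
  assume k: "0 < k" "k < k0"
  then have ex: "\<exists>k::nat. k > 0 \<and> x [^] k \<in> M" unfolding k0_def by (auto split: if_splits)
  then have "k0 = (LEAST k::nat. k > 0 \<and> x [^] k \<in> M)" unfolding k0_def by simp
  then show ?thesis using not_less_Least[of k "\<lambda>k. k > 0 \<and> x [^] k \<in> M"] k by auto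
qed

lemma k0_zero: "k0 = 0 \<Longrightarrow> 0 < k \<Longrightarrow> x [^] (k::nat) \<notin> M"
proof -
  assume k: "k0 = 0" "0 < k"
  show ?thesis
  proof
    assume "x [^] k \<in> M"
    then have ex: "\<exists>k::nat. k > 0 \<and> x [^] k \<in> M" using k by blast
    then have "k0 = (LEAST k::nat. k > 0 \<and> x [^] k \<in> M)" unfolding k0_def by simp
    then have "k0 > 0" using LeastI_ex[OF ex] by simp
    then show False using k by simp
  qed
qed

lemma pow_abs: "x [^] (e::int) \<in> M \<Longrightarrow> x [^] (nat \<bar>e\<bar>) \<in> M"
proof (cases "e \<ge> 0")
  case True
  assume "x [^] e \<in> M"
  moreover have "x [^] (nat \<bar>e\<bar>) = x [^] e" using True pow_nat[OF True, of G x] by simp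
  ultimately show ?thesis by simp
next
  case False
  assume a: "x [^] e \<in> M"
  have "x [^] e = x [^] (- int (nat \<bar>e\<bar>))" using False by simp
  also have "\<dots> = inv (x [^] (nat \<bar>e\<bar>))" using xc by (simp add: int_pow_neg int_pow_int)
  finally have "inv (x [^] (nat \<bar>e\<bar>)) \<in> M" using a by simp
  then have "inv (inv (x [^] (nat \<bar>e\<bar>))) \<in> M" by (rule hM.Hi)
  then show ?thesis using xc by simp
qed

lemma k0pow: "x [^] (int k0 * q) \<in> M" if "k0 > 0"
proof -
  have "x [^] (int k0 * q) = (x [^] (int k0)) [^] q" using xc by (simp add: int_pow_pow)
  also have "\<dots> = (x [^] k0) [^] q" by (simp add: int_pow_int)
  finally show ?thesis using hM.Hpi[OF k0_prop[OF that]] by simp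
qed

lemma P_dvd: "x [^] (e::int) \<in> M \<Longrightarrow> (k0 = 0 \<longrightarrow> e = 0) \<and> (k0 > 0 \<longrightarrow> int k0 dvd e)"
proof -
  assume e: "x [^] e \<in> M"
  have A: "k0 = 0 \<longrightarrow> e = 0"
  proof
    assume k: "k0 = 0"
    show "e = 0"
    proof (rule ccontr)
      assume "e \<noteq> 0"
      then have "nat \<bar>e\<bar> > 0" by simp
      then show False using k0_zero[OF k] pow_abs[OF e] by blast
    qed
  qed
  have B: "k0 > 0 \<longrightarrow> int k0 dvd e"
  proof
    assume k: "k0 > 0"
    define q r where "q = e div int k0" and "r = e mod int k0"
    have er: "e = int k0 * q + r" unfolding q_def r_def by simp
    have r0: "0 \<le> r" and rk: "r < int k0" unfolding r_def using k by auto
    have "x [^] e = x [^] (int k0 * q) \<otimes> x [^] r" unfolding er using xc by (simp add: int_pow_mult)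
    then have "x [^] r = inv (x [^] (int k0 * q)) \<otimes> x [^] e" using xc by (simp add: m_assoc[symmetric])
    then have "x [^] r \<in> M" using hM.Hm[OF hM.Hi[OF k0pow[OF k]] e] by simp
    then have "x [^] (nat r) \<in> M" using pow_nat[OF r0, of G x] by simp
    then have "\<not> (0 < nat r)" using k0_min[of "nat r"] rk by auto
    then have "r = 0" using r0 by simp
    then show "int k0 dvd e" unfolding r_def by (simp add: dvd_eq_mod_eq_0)
  qed
  show ?thesis using A B by blast
qed

definition "ok j \<longleftrightarrow> k0 = 0 \<or> (0 \<le> j \<and> j < int k0)"

lemma ok0: "ok 0" unfolding ok_def by auto

lemma exist_j: "y \<in> M' \<Longrightarrow> \<exists>j. ok j \<and> y \<otimes> inv (x [^] j) \<in> M"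
proof -
  assume "y \<in> M'"
  then obtain m i where y: "y = m \<otimes> x [^] (i::int)" and m: "m \<in> M" unfolding M'_def by blast
  have mc: "m \<in> carrier G" using hM.Hc[OF m] .
  show ?thesis
  proof (cases "k0 = 0")
    case True
    have "y \<otimes> inv (x [^] i) = m" unfolding y using mc xc by (simp add: m_assoc)
    then show ?thesis using True m unfolding ok_def by auto
  next
    case False
    then have k: "k0 > 0" by simp
    define j where "j = i mod int k0"
    have ij: "i - j = int k0 * (i div int k0)" unfolding j_def by (simp add: minus_mod_eq_mult_div)
    have "y \<otimes> inv (x [^] j) = m \<otimes> x [^] (i - j)" unfolding y using mc xc by (simp add: m_assoc int_pow_diff)
    also have "\<dots> \<in> M" unfolding ij by (rule hM.Hm[OF m k0pow[OF k]])
    finally have "y \<otimes> inv (x [^] j) \<in> M" .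
    moreover have "ok j" unfolding ok_def j_def using k by simp
    ultimately show ?thesis by blast
  qed
qed

lemma unique_j:
  assumes y: "y \<in> carrier G" and i: "ok i" and j: "ok j"
    and yi: "y \<otimes> inv (x [^] i) \<in> M" and yj: "y \<otimes> inv (x [^] j) \<in> M"
  shows "i = j"
proof -
  have "inv (y \<otimes> inv (x [^] i)) \<otimes> (y \<otimes> inv (x [^] j)) = x [^] (i - j)"
    using y xc by (simp add: inv_mult_group m_assoc int_pow_diff)
  moreover have "inv (y \<otimes> inv (x [^] i)) \<otimes> (y \<otimes> inv (x [^] j)) \<in> M" by (rule hM.Hm[OF hM.Hi[OF yi] yj])
  ultimately have d: "x [^] (i - j) \<in> M" by simp
  show ?thesis
  proof (cases "k0 = 0")
    case True then show ?thesis using P_dvd[OF d] by simp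
  next
    case False
    then have k: "k0 > 0" by simp
    have dv: "int k0 dvd (i - j)" using P_dvd[OF d] k by simp
    show ?thesis
    proof (rule ccontr)
      assume "i \<noteq> j"
      then have "\<bar>int k0\<bar> \<le> \<bar>i - j\<bar>" using dvd_imp_le_int[OF _ dv] by simp
      moreover have "\<bar>i - j\<bar> < int k0" using i j False unfolding ok_def by auto
      ultimately show False by simp
    qed
  qed
qed

definition "jx y = (THE j. ok j \<and> y \<otimes> inv (x [^] j) \<in> M)"

lemma jx_prop: "y \<in> M' \<Longrightarrow> ok (jx y) \<and> y \<otimes> inv (x [^] (jx y)) \<in> M"
proof -
  assume y: "y \<in> M'"
  have yc: "y \<in> carrier G" using y M'c by blast
  obtain j where j: "ok j \<and> y \<otimes> inv (x [^] j) \<in> M" using exist_j[OF y] by blast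
  have "\<exists>!j. ok j \<and> y \<otimes> inv (x [^] j) \<in> M"
    by (rule ex1I[of _ j]) (use j unique_j[OF yc] in auto)
  then show ?thesis unfolding jx_def by (rule theI')
qed

lemma jx_eq: "y \<in> M' \<Longrightarrow> ok j \<Longrightarrow> y \<otimes> inv (x [^] j) \<in> M \<Longrightarrow> jx y = j"
  using jx_prop[of y] unique_j[of y "jx y" j] M'c by blast

lemma jx_M: "m \<in> M \<Longrightarrow> jx m = 0"
  by (rule jx_eq) (use MM' ok0 hM.Hc in auto)

definition "\<beta> = (if k0 = 0 then 0 else \<psi> (x [^] k0) / real k0)"

definition "f y = \<psi> (y \<otimes> inv (x [^] (jx y))) + of_int (jx y) * \<beta>"

lemma f_M: "m \<in> M \<Longrightarrow> f m = \<psi> m"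
  unfolding f_def using jx_M[of m] hM.Hc[of m] by simp

lemma psi_xpow: "x [^] (e::int) \<in> M \<Longrightarrow> \<psi> (x [^] e) = of_int e * \<beta>"
proof (cases "k0 = 0")
  case True
  assume "x [^] e \<in> M"
  then have "e = 0" using P_dvd True by blast
  then show ?thesis using hM.phi_one by simp
next
  case False
  assume e: "x [^] e \<in> M"
  then have k: "k0 > 0" using False by simp
  obtain q where q: "e = int k0 * q" using P_dvd[OF e] k by (auto elim: dvdE)
  have "x [^] e = (x [^] (int k0)) [^] q" unfolding q using xc by (simp add: int_pow_pow)
  also have "x [^] (int k0) = x [^] k0" by (rule int_pow_int)
  finally have "x [^] e = (x [^] k0) [^] q" .
  then have "\<psi> (x [^] e) = of_int q * \<psi> (x [^] k0)" using hM.hom k0_prop[OF k] by simp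
  moreover have "of_int e * \<beta> = of_int q * \<psi> (x [^] k0)" unfolding \<beta>_def q using k by simp
  ultimately show ?thesis by simp
qed

lemma f_qm:
  assumes y: "y \<in> M'" and z: "z \<in> M'"
  shows "\<bar>f (y \<otimes> z) - f y - f z\<bar> \<le> 2 * C"
proof -
  have yc: "y \<in> carrier G" and zc: "z \<in> carrier G" using y z M'c by auto
  have yz: "y \<otimes> z \<in> M'" by (rule subgroup.m_closed[OF M'sub y z])
  define i j r where "i = jx y" and "j = jx z" and "r = jx (y \<otimes> z)"
  define m m' u where "m = y \<otimes> inv (x [^] i)" and "m' = z \<otimes> inv (x [^] j)" and "u = (y \<otimes> z) \<otimes> inv (x [^] r)"
  have m: "m \<in> M" unfolding m_def i_def using jx_prop[OF y] by simp
  have m': "m' \<in> M" unfolding m'_def j_def using jx_prop[OF z] by simp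
  have u: "u \<in> M" unfolding u_def r_def using jx_prop[OF yz] by simp
  have mc: "m \<in> carrier G" and m'c: "m' \<in> carrier G" using m m' hM.Hc by auto
  define m'' where "m'' = x [^] i \<otimes> m' \<otimes> inv (x [^] i)"
  have m'': "m'' \<in> M" unfolding m''_def by (rule conjM[OF xpc m'])
  have m''c: "m'' \<in> carrier G" using m'' hM.Hc by auto
  have yeq: "y = m \<otimes> x [^] i" unfolding m_def using yc xc by (simp add: m_assoc)
  have zeq: "z = m' \<otimes> x [^] j" unfolding m'_def using zc xc by (simp add: m_assoc)
  define e where "e = i + j - r"
  have ueq: "u = (m \<otimes> m'') \<otimes> x [^] e"
  proof -
    have "x [^] e = x [^] i \<otimes> x [^] j \<otimes> inv (x [^] r)" unfolding e_def using xc
      by (simp add: int_pow_diff int_pow_mult)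
    then show ?thesis unfolding u_def m''_def yeq zeq using mc m'c xc by (simp add: m_assoc)
  qed
  have mm: "m \<otimes> m'' \<in> M" by (rule hM.Hm[OF m m''])
  have xe: "x [^] e \<in> M"
  proof -
    have "x [^] e = inv (m \<otimes> m'') \<otimes> u" unfolding ueq using gc2[of "m \<otimes> m''" "x [^] e"] mc m''c xc by simp
    then show ?thesis using hM.Hm[OF hM.Hi[OF mm] u] by simp
  qed
  have q1: "\<bar>\<psi> u - \<psi> (m \<otimes> m'') - \<psi> (x [^] e)\<bar> \<le> C" unfolding ueq using hM.qm mm xe by blast
  have q2: "\<bar>\<psi> (m \<otimes> m'') - \<psi> m - \<psi> m''\<bar> \<le> C" using hM.qm m m'' by blast
  have q3: "\<psi> m'' = \<psi> m'" unfolding m''_def using hM.cinv xpc m' by blast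
  have q4: "\<psi> (x [^] e) = of_int e * \<beta>" by (rule psi_xpow[OF xe])
  have fy: "f y = \<psi> m + of_int i * \<beta>" unfolding f_def m_def i_def ..
  have fz: "f z = \<psi> m' + of_int j * \<beta>" unfolding f_def m'_def j_def ..
  have fyz: "f (y \<otimes> z) = \<psi> u + of_int r * \<beta>" unfolding f_def u_def r_def ..
  have "of_int e * \<beta> = of_int i * \<beta> + of_int j * \<beta> - of_int r * \<beta>" unfolding e_def by (simp add: algebra_simps)
  then show ?thesis unfolding fy fz fyz using q1 q2 q3 q4 by linarith
qed

lemma M'norm: "g \<in> carrier G \<Longrightarrow> y \<in> M' \<Longrightarrow> g \<otimes> y \<otimes> inv g \<in> M'"
  by (rule normal_mid[OF M'sub _ M'L]) (use NM MM' in auto)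

lemma f_conj:
  assumes g: "g \<in> carrier G" and y: "y \<in> M'"
  shows "\<bar>f (g \<otimes> y \<otimes> inv g) - f y\<bar> \<le> 2 * C"
proof -
  have yc: "y \<in> carrier G" using y M'c by auto
  define i where "i = jx y"
  define m where "m = y \<otimes> inv (x [^] i)"
  have m: "m \<in> M" unfolding m_def i_def using jx_prop[OF y] by simp
  have mc: "m \<in> carrier G" using m hM.Hc by auto
  have oki: "ok i" unfolding i_def using jx_prop[OF y] by simp
  define c where "c = commut G g (x [^] i)"
  have cN: "c \<in> N" unfolding c_def by (rule commN[OF g xpL])
  have cM: "c \<in> M" using cN NM by blast
  have gm: "g \<otimes> m \<otimes> inv g \<in> M" by (rule conjM[OF g m])
  have yeq: "y = m \<otimes> x [^] i" unfolding m_def using yc xc by (simp add: m_assoc)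
  have e1: "(g \<otimes> y \<otimes> inv g) \<otimes> inv (x [^] i) = (g \<otimes> m \<otimes> inv g) \<otimes> c"
    unfolding c_def commut_def yeq using g mc xc by (simp add: m_assoc)
  have inM: "(g \<otimes> y \<otimes> inv g) \<otimes> inv (x [^] i) \<in> M" unfolding e1 by (rule hM.Hm[OF gm cM])
  have gy: "g \<otimes> y \<otimes> inv g \<in> M'" by (rule M'norm[OF g y])
  have ji: "jx (g \<otimes> y \<otimes> inv g) = i" by (rule jx_eq[OF gy oki inM])
  have fgy: "f (g \<otimes> y \<otimes> inv g) = \<psi> ((g \<otimes> m \<otimes> inv g) \<otimes> c) + of_int i * \<beta>"
    unfolding f_def ji e1 ..
  have fy: "f y = \<psi> m + of_int i * \<beta>" unfolding f_def m_def i_def ..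
  have q1: "\<bar>\<psi> ((g \<otimes> m \<otimes> inv g) \<otimes> c) - \<psi> (g \<otimes> m \<otimes> inv g) - \<psi> c\<bar> \<le> C" using hM.qm gm cM by blast
  have q2: "\<psi> (g \<otimes> m \<otimes> inv g) = \<psi> m" using hM.cinv g m by blast
  have q3: "\<psi> c = \<nu> c" using ext cN by blast
  have q4: "\<bar>\<nu> c\<bar> \<le> C" unfolding c_def by (rule hC[OF g xpL])
  show ?thesis unfolding fgy fy using q1 q2 q3 q4 by linarith
qed

sublocale hf: qmloc G M' f "2 * C"
  by (rule qmloc.intro[OF group_axioms qmloc_axioms.intro]) (use M'sub f_qm in auto)

lemma hz_M: "m \<in> M \<Longrightarrow> hf.hz m = \<psi> m"
proof -
  assume m: "m \<in> M"
  have "hf.hz m = f m"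
  proof (rule hf.hz_exact)
    show "m \<in> M'" using m MM' by blast
    fix n :: nat
    have "f (m [^] n) = \<psi> (m [^] n)" using f_M hM.Hp[OF m] by simp
    also have "\<dots> = real n * \<psi> m" using hM.phi_nat[OF m] .
    finally show "f (m [^] n) = real n * f m" using f_M[OF m] by simp
  qed
  then show ?thesis using f_M[OF m] by simp
qed

lemma hz_cinv: "\<forall>g\<in>carrier G. \<forall>y\<in>M'. hf.hz (g \<otimes> y \<otimes> inv g) = hf.hz y"
proof (intro ballI)
  fix g y assume g: "g \<in> carrier G" and y: "y \<in> M'"
  have yc: "y \<in> carrier G" using y M'c by auto
  show "hf.hz (g \<otimes> y \<otimes> inv g) = hf.hz y"
  proof (rule hf.hz_eq[OF M'norm[OF g y] y])
    fix n :: nat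
    have "(g \<otimes> y \<otimes> inv g) [^] n = g \<otimes> y [^] n \<otimes> inv g" by (rule conj_pow[OF g yc])
    then show "\<bar>f ((g \<otimes> y \<otimes> inv g) [^] n) - f (y [^] n)\<bar> \<le> 2 * C"
      using f_conj[OF g hf.Hp[OF y]] by simp
  qed
qed

lemma new_good: "good C M' hf.hz"
proof -
  have hl: "hqmloc G M' hf.hz (4 * (2 * C))"
    by (rule hqmloc.intro[OF group_axioms hqmloc_axioms.intro]) (use M'sub hf.hz_ipow hz_cinv hf.hz_qm in auto)
  have cb: "\<forall>a\<in>M'. \<forall>b\<in>M'. \<bar>hf.hz (commut G a b)\<bar> \<le> C"
  proof (intro ballI)
    fix a b assume a: "a \<in> M'" and b: "b \<in> M'"
    have ac: "a \<in> carrier G" using a M'c by auto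
    have bL: "b \<in> L" using b M'L by auto
    have cN: "commut G a b \<in> N" by (rule commN[OF ac bL])
    have "hf.hz (commut G a b) = \<psi> (commut G a b)" using hz_M cN NM by blast
    also have "\<dots> = \<nu> (commut G a b)" using ext cN by blast
    finally show "\<bar>hf.hz (commut G a b)\<bar> \<le> C" using hC[OF ac bL] by simp
  qed
  have qm: "\<forall>a\<in>M'. \<forall>b\<in>M'. \<bar>hf.hz (a \<otimes> b) - hf.hz a - hf.hz b\<bar> \<le> C"
    using bavard[OF hl cb] by blast
  have extn: "\<forall>y\<in>N. hf.hz y = \<nu> y" using hz_M ext NM by auto
  show ?thesis unfolding good_def
    using M'sub NM MM' M'L extn hf.hz_ipow hz_cinv qm by blast
qed

end

lemma (in setting) extend:
  assumes hC: "\<And>g l. g \<in> carrier G \<Longrightarrow> l \<in> L \<Longrightarrow> \<bar>\<nu> (commut G g l)\<bar> \<le> C"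
    and gd: "good C M \<psi>" and xL: "x \<in> L" and xM: "x \<notin> M"
  shows "\<exists>M' \<psi>'. good C M' \<psi>' \<and> M \<subseteq> M' \<and> x \<in> M' \<and> (\<forall>y\<in>M. \<psi>' y = \<psi> y)"
proof -
  interpret e: extctx G L N \<nu> C M \<psi> x
    by (rule extctx.intro[OF setting_axioms extctx_axioms.intro]) (use hC gd xL xM in auto)
  show ?thesis using e.new_good e.MM' e.xM' e.hz_M by blast
qed

context setting begin

lemma good_facts:
  assumes "good C M \<psi>"
  shows "subgroup M G" "N \<subseteq> M" "M \<subseteq> L" "\<forall>x\<in>N. \<psi> x = \<nu> x"
    "\<forall>x\<in>M. \<forall>n::int. \<psi> (x [^] n) = of_int n * \<psi> x"
    "\<forall>g\<in>carrier G. \<forall>x\<in>M. \<psi> (g \<otimes> x \<otimes> inv g) = \<psi> x"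
    "\<forall>x\<in>M. \<forall>y\<in>M. \<bar>\<psi> (x \<otimes> y) - \<psi> x - \<psi> y\<bar> \<le> C"
  using assms unfolding good_def by auto

lemma good_cong:
  assumes gd: "good C M \<psi>" and eq: "\<And>y. y \<in> M \<Longrightarrow> \<psi>' y = \<psi> y"
  shows "good C M \<psi>'"
proof -
  note f = good_facts[OF gd]
  have pw: "y \<in> M \<Longrightarrow> y [^] (n::int) \<in> M" for y n by (rule subgroup_int_pow_closed[OF f(1)])
  have cj: "g \<in> carrier G \<Longrightarrow> y \<in> M \<Longrightarrow> g \<otimes> y \<otimes> inv g \<in> M" for g y by (rule normal_mid[OF f(1) f(2) f(3)])
  have ml: "y \<in> M \<Longrightarrow> z \<in> M \<Longrightarrow> y \<otimes> z \<in> M" for y z by (rule subgroup.m_closed[OF f(1)])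
  have a: "\<forall>x\<in>N. \<psi>' x = \<nu> x" using f(4) f(2) eq by auto
  have b: "\<forall>x\<in>M. \<forall>n::int. \<psi>' (x [^] n) = of_int n * \<psi>' x" using f(5) eq pw by simp
  have c: "\<forall>g\<in>carrier G. \<forall>x\<in>M. \<psi>' (g \<otimes> x \<otimes> inv g) = \<psi>' x" using f(6) eq cj by simp
  have d: "\<forall>x\<in>M. \<forall>y\<in>M. \<bar>\<psi>' (x \<otimes> y) - \<psi>' x - \<psi>' y\<bar> \<le> C" using f(7) eq ml by simp
  show ?thesis unfolding good_def using f(1-3) a b c d by blast
qed

definition "isgr R \<longleftrightarrow> (\<forall>y r r'. (y, r) \<in> R \<longrightarrow> (y, r') \<in> R \<longrightarrow> r = r')"
definition "fn R y = (SOME r. (y, r) \<in> R)"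

lemma fn_eq: "isgr R \<Longrightarrow> (y, r) \<in> R \<Longrightarrow> fn R y = r"
  unfolding fn_def isgr_def by (rule some_equality) auto

lemma fn_mem: "y \<in> fst ` R \<Longrightarrow> (y, fn R y) \<in> R"
  unfolding fn_def by (rule someI_ex) force

lemma graph_isgr: "isgr ((\<lambda>y. (y, \<psi> y)) ` M)" unfolding isgr_def by auto
lemma graph_fst: "fst ` ((\<lambda>y. (y, \<psi> y)) ` M) = M" by force
lemma graph_fn: "y \<in> M \<Longrightarrow> fn ((\<lambda>y. (y, \<psi> y)) ` M) y = \<psi> y"
  by (rule fn_eq[OF graph_isgr]) auto

definition "Fam C = {R. isgr R \<and> good C (fst ` R) (fn R)}"

lemma graph_Fam: "good C M \<psi> \<Longrightarrow> (\<lambda>y. (y, \<psi> y)) ` M \<in> Fam C"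
proof -
  assume gd: "good C M \<psi>"
  have "good C M (fn ((\<lambda>y. (y, \<psi> y)) ` M))" by (rule good_cong[OF gd]) (rule graph_fn)
  then show ?thesis unfolding Fam_def using graph_isgr[of \<psi> M] graph_fst[of \<psi> M] by simp
qed

lemma good_N:
  assumes hC: "\<And>g l. g \<in> carrier G \<Longrightarrow> l \<in> L \<Longrightarrow> \<bar>\<nu> (commut G g l)\<bar> \<le> C"
  shows "good C N \<nu>"
proof -
  have cb: "\<forall>a\<in>N. \<forall>b\<in>N. \<bar>\<nu> (commut G a b)\<bar> \<le> C" using hC Nc NL by blast
  have qm: "\<forall>a\<in>N. \<forall>b\<in>N. \<bar>\<nu> (a \<otimes> b) - \<nu> a - \<nu> b\<bar> \<le> C" using bavard[OF Nloc cb] by blast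
  show ?thesis unfolding good_def using Nsub NL Nhom Ninv qm by blast
qed

lemma chain_ub:
  assumes hC: "\<And>g l. g \<in> carrier G \<Longrightarrow> l \<in> L \<Longrightarrow> \<bar>\<nu> (commut G g l)\<bar> \<le> C"
    and Ch: "Ch \<in> chains (Fam C)"
  shows "\<exists>U\<in>Fam C. \<forall>X\<in>Ch. X \<subseteq> U"
proof (cases "Ch = {}")
  case True
  then show ?thesis using graph_Fam[OF good_N[OF hC]] by blast
next
  case False
  have sub: "Ch \<subseteq> Fam C" and chn: "\<And>A B. A \<in> Ch \<Longrightarrow> B \<in> Ch \<Longrightarrow> A \<subseteq> B \<or> B \<subseteq> A"
    using Ch unfolding chains_def chain_subset_def by auto
  have gr: "R \<in> Ch \<Longrightarrow> isgr R" for R using sub unfolding Fam_def by blast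
  have gd: "R \<in> Ch \<Longrightarrow> good C (fst ` R) (fn R)" for R using sub unfolding Fam_def by blast
  define U where "U = \<Union>Ch"
  have Ugr: "isgr U" unfolding isgr_def U_def
  proof (intro allI impI)
    fix y r r' assume "(y, r) \<in> \<Union>Ch" "(y, r') \<in> \<Union>Ch"
    then obtain A B where A: "A \<in> Ch" "(y, r) \<in> A" and B: "B \<in> Ch" "(y, r') \<in> B" by blast
    show "r = r'"
    proof (cases "A \<subseteq> B")
      case True then show ?thesis using gr[OF B(1)] A B unfolding isgr_def by blast
    next
      case False then have "B \<subseteq> A" using chn[OF A(1) B(1)] by blast
      then show ?thesis using gr[OF A(1)] A B unfolding isgr_def by blast
    qed
  qed
  define MU where "MU = fst ` U"
  have MUeq: "MU = (\<Union>R\<in>Ch. fst ` R)" unfolding MU_def U_def by blast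
  have fnU: "R \<in> Ch \<Longrightarrow> y \<in> fst ` R \<Longrightarrow> fn U y = fn R y" for R y
    using fn_eq[OF Ugr] fn_mem[of y R] unfolding U_def by blast
  have pick: "a \<in> MU \<Longrightarrow> b \<in> MU \<Longrightarrow> \<exists>R\<in>Ch. a \<in> fst ` R \<and> b \<in> fst ` R" for a b
  proof -
    assume "a \<in> MU" "b \<in> MU"
    then obtain A B where A: "A \<in> Ch" "a \<in> fst ` A" and B: "B \<in> Ch" "b \<in> fst ` B" unfolding MUeq by blast
    show ?thesis
    proof (cases "A \<subseteq> B")
      case True then show ?thesis using A B by blast
    next
      case False then have "B \<subseteq> A" using chn[OF A(1) B(1)] by blast
      then show ?thesis using A B by blast
    qed
  qed
  obtain R0 where R0: "R0 \<in> Ch" using False by blast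
  have Rsub: "R \<in> Ch \<Longrightarrow> subgroup (fst ` R) G" for R using good_facts(1)[OF gd] by blast
  have MUsub: "subgroup MU G"
  proof (rule subgroupI)
    show "MU \<subseteq> carrier G" unfolding MUeq using Rsub subgroup.subset by blast
    show "MU \<noteq> {}" unfolding MUeq using R0 subgroup.one_closed[OF Rsub[OF R0]] by blast
  next
    fix a assume "a \<in> MU"
    then obtain R where R: "R \<in> Ch" "a \<in> fst ` R" unfolding MUeq by blast
    then have "inv a \<in> fst ` R" using subgroup.m_inv_closed[OF Rsub[OF R(1)]] by blast
    then show "inv a \<in> MU" unfolding MUeq using R by blast
  next
    fix a b assume "a \<in> MU" "b \<in> MU"
    then obtain R where R: "R \<in> Ch" "a \<in> fst ` R" "b \<in> fst ` R" using pick by blast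
    then have "a \<otimes> b \<in> fst ` R" using subgroup.m_closed[OF Rsub[OF R(1)]] by blast
    then show "a \<otimes> b \<in> MU" unfolding MUeq using R by blast
  qed
  have NMU: "N \<subseteq> MU" unfolding MUeq using good_facts(2)[OF gd[OF R0]] R0 by blast
  have MUL: "MU \<subseteq> L" unfolding MUeq using good_facts(3)[OF gd] by blast
  have e1: "\<forall>x\<in>N. fn U x = \<nu> x"
  proof
    fix y assume y: "y \<in> N"
    then have "y \<in> fst ` R0" using good_facts(2)[OF gd[OF R0]] by blast
    moreover have "fn R0 y = \<nu> y" using bspec[OF good_facts(4)[OF gd[OF R0]] y] .
    ultimately show "fn U y = \<nu> y" using fnU[OF R0] by simp
  qed
  have e2: "\<forall>x\<in>MU. \<forall>n::int. fn U (x [^] n) = of_int n * fn U x"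
  proof (intro ballI allI)
    fix y and n :: int assume "y \<in> MU"
    then obtain R where R: "R \<in> Ch" "y \<in> fst ` R" unfolding MUeq by blast
    have "y [^] n \<in> fst ` R" by (rule subgroup_int_pow_closed[OF Rsub[OF R(1)] R(2)])
    moreover have "fn R (y [^] n) = of_int n * fn R y" using bspec[OF good_facts(5)[OF gd[OF R(1)]] R(2)] by blast
    ultimately show "fn U (y [^] n) = of_int n * fn U y" using fnU[OF R(1)] R(2) by simp
  qed
  have e3: "\<forall>g\<in>carrier G. \<forall>x\<in>MU. fn U (g \<otimes> x \<otimes> inv g) = fn U x"
  proof (intro ballI)
    fix g y assume g: "g \<in> carrier G" and "y \<in> MU"
    then obtain R where R: "R \<in> Ch" "y \<in> fst ` R" unfolding MUeq by blast
    have "g \<otimes> y \<otimes> inv g \<in> fst ` R"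
      by (rule normal_mid[OF Rsub[OF R(1)] good_facts(2)[OF gd[OF R(1)]] good_facts(3)[OF gd[OF R(1)]] g R(2)])
    moreover have "fn R (g \<otimes> y \<otimes> inv g) = fn R y" using bspec[OF bspec[OF good_facts(6)[OF gd[OF R(1)]] g] R(2)] .
    ultimately show "fn U (g \<otimes> y \<otimes> inv g) = fn U y" using fnU[OF R(1)] R(2) by simp
  qed
  have e4: "\<forall>x\<in>MU. \<forall>y\<in>MU. \<bar>fn U (x \<otimes> y) - fn U x - fn U y\<bar> \<le> C"
  proof (intro ballI)
    fix a b assume "a \<in> MU" "b \<in> MU"
    then obtain R where R: "R \<in> Ch" "a \<in> fst ` R" "b \<in> fst ` R" using pick by blast
    have "a \<otimes> b \<in> fst ` R" using subgroup.m_closed[OF Rsub[OF R(1)] R(2) R(3)] .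
    moreover have "\<bar>fn R (a \<otimes> b) - fn R a - fn R b\<bar> \<le> C" using bspec[OF bspec[OF good_facts(7)[OF gd[OF R(1)]] R(2)] R(3)] .
    ultimately show "\<bar>fn U (a \<otimes> b) - fn U a - fn U b\<bar> \<le> C"
      using fnU[OF R(1)] R(2) R(3) by simp
  qed
  have "good C MU (fn U)" unfolding good_def using MUsub NMU MUL e1 e2 e3 e4 by blast
  then have "U \<in> Fam C" unfolding Fam_def MU_def using Ugr by blast
  moreover have "\<forall>X\<in>Ch. X \<subseteq> U" unfolding U_def by blast
  ultimately show ?thesis by blast
qed

lemma ext_exists:
  assumes hC: "\<And>g l. g \<in> carrier G \<Longrightarrow> l \<in> L \<Longrightarrow> \<bar>\<nu> (commut G g l)\<bar> \<le> C"
  shows "\<exists>\<psi>. hqm_inv G L \<psi> \<and> (\<forall>x\<in>N. \<psi> x = \<nu> x)"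
proof -
  have "\<forall>Ch\<in>chains (Fam C). \<exists>U\<in>Fam C. \<forall>X\<in>Ch. X \<subseteq> U" using chain_ub[OF hC] by blast
  then obtain R where R: "R \<in> Fam C" and max: "\<forall>X\<in>Fam C. R \<subseteq> X \<longrightarrow> X = R"
    using Zorn_Lemma2[of "Fam C"] by blast
  have Rgr: "isgr R" and Rgd: "good C (fst ` R) (fn R)" using R unfolding Fam_def by auto
  define M where "M = fst ` R"
  define \<psi> where "\<psi> = fn R"
  have gdM: "good C M \<psi>" unfolding M_def \<psi>_def by (rule Rgd)
  have MsL': "M \<subseteq> L" using good_facts(3)[OF gdM] .
  have MeqL: "M = L"
  proof (rule ccontr)
    assume "M \<noteq> L"
    then obtain x where xL: "x \<in> L" and xM: "x \<notin> M" using MsL' by blast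
    obtain M' \<psi>' where gd': "good C M' \<psi>'" and MM': "M \<subseteq> M'" and xM': "x \<in> M'" and ag: "\<forall>y\<in>M. \<psi>' y = \<psi> y"
      using extend[OF hC gdM xL xM] by blast
    define R' where "R' = (\<lambda>y. (y, \<psi>' y)) ` M'"
    have R'F: "R' \<in> Fam C" unfolding R'_def by (rule graph_Fam[OF gd'])
    have "R \<subseteq> R'"
    proof
      fix p assume p: "p \<in> R"
      obtain y r where pe: "p = (y, r)" by (cases p)
      have yM: "y \<in> M" unfolding M_def using p pe by force
      have "r = \<psi> y" unfolding \<psi>_def using fn_eq[OF Rgr] p pe by simp
      then have "r = \<psi>' y" using ag yM by simp
      then show "p \<in> R'" unfolding R'_def pe using yM MM' by blast
    qed
    then have "R' = R" using max R'F by blast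
    then have "x \<in> M" unfolding M_def using xM' graph_fst[of \<psi>' M'] R'_def by simp
    then show False using xM by simp
  qed
  have gdL: "good C L \<psi>" using gdM MeqL by simp
  note f = good_facts[OF gdL]
  have "defect G L \<psi> \<le> ereal C" by (rule defect_lub) (use f(7) in blast)
  then have "defect G L \<psi> < \<infinity>" by (rule order_le_less_trans) simp
  then have "hqm_inv G L \<psi>" unfolding hqm_inv_def hqm_def using f(5) f(6) by blast
  then show ?thesis using f(4) by blast
qed

end

theorem theorem8p9:
  fixes G (structure) and L N :: "'a set" and \<nu> :: "'a \<Rightarrow> real"
  assumes "group G"
    and "L \<lhd> G" and "N \<lhd> G"
    and "N \<subseteq> L"
    and "\<forall>g\<in>carrier G. \<forall>l\<in>L. commut G g l \<in> N"
    and "hqm_inv G N \<nu>"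
  shows "((\<exists>\<psi>. hqm_inv G L \<psi> \<and> (\<forall>x\<in>N. \<psi> x = \<nu> x)) \<longleftrightarrow>
            (\<forall>t\<ge>1. Dt G L t \<nu> < \<infinity>))
       \<and> ((\<forall>t\<ge>1. Dt G L t \<nu> < \<infinity>) \<longleftrightarrow> (\<exists>t\<ge>1. Dt G L t \<nu> < \<infinity>))
       \<and> ((\<exists>t\<ge>1. Dt G L t \<nu> < \<infinity>) \<longleftrightarrow> Dt G L 1 \<nu> = defect G N \<nu>)
       \<and> (Dt G L 1 \<nu> = defect G N \<nu> \<longleftrightarrow> Dt G L 1 \<nu> < \<infinity>)"
proof -
  interpret s: setting G L N \<nu>
    by (rule setting.intro[OF assms(1) setting_axioms.intro]) (use assms in auto)
  define P1 where "P1 = (\<exists>\<psi>. hqm_inv G L \<psi> \<and> (\<forall>x\<in>N. \<psi> x = \<nu> x))"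
  define P2 where "P2 = (\<forall>t\<ge>1. Dt G L t \<nu> < \<infinity>)"
  define P3 where "P3 = (\<exists>t\<ge>1. Dt G L t \<nu> < \<infinity>)"
  define P4 where "P4 = (Dt G L 1 \<nu> = defect G N \<nu>)"
  define P5 where "P5 = (Dt G L 1 \<nu> < \<infinity>)"
  have one_N: "\<one> \<in> N" using subgroup.one_closed[OF s.Nsub] .
  have one_L: "\<one> \<in> L" using subgroup.one_closed[OF s.Lsub] .
  have defeq: "defect G N \<nu> = ereal s.Dn"
  proof -
    have "ereal \<bar>\<nu> (\<one> \<otimes> \<one>) - \<nu> \<one> - \<nu> \<one>\<bar> \<le> defect G N \<nu>" by (rule defect_ub[OF one_N one_N])
    then have "defect G N \<nu> \<noteq> - \<infinity>" by auto
    then show ?thesis unfolding s.Dn_def using s.Ndef by (cases "defect G N \<nu>") auto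
  qed
  have i12: "P1 \<Longrightarrow> P2" unfolding P1_def P2_def using s.ext_imp_Dt by blast
  have i23: "P2 \<Longrightarrow> P3" unfolding P2_def P3_def by blast
  have i35: "P3 \<Longrightarrow> P5" unfolding P3_def P5_def using s.Dt_mono order_le_less_trans by blast
  have i45: "P4 \<Longrightarrow> P5" unfolding P4_def P5_def using s.Ndef by simp
  have i5C: "\<exists>C. (\<forall>g l. g \<in> carrier G \<longrightarrow> l \<in> L \<longrightarrow> \<bar>\<nu> (commut G g l)\<bar> \<le> C) \<and> Dt G L 1 \<nu> = ereal C" if p5: P5
  proof -
    have "ereal \<bar>\<nu> (commut G \<one> \<one>)\<bar> \<le> Dt G L 1 \<nu>" by (rule s.Dt1_ub) (use one_L in auto)
    then have "Dt G L 1 \<nu> \<noteq> - \<infinity>" by auto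
    then have e: "Dt G L 1 \<nu> = ereal (real_of_ereal (Dt G L 1 \<nu>))" using p5 unfolding P5_def
      by (cases "Dt G L 1 \<nu>") auto
    have "\<forall>g l. g \<in> carrier G \<longrightarrow> l \<in> L \<longrightarrow> \<bar>\<nu> (commut G g l)\<bar> \<le> real_of_ereal (Dt G L 1 \<nu>)"
    proof (intro allI impI)
      fix g l assume "g \<in> carrier G" "l \<in> L"
      then have "ereal \<bar>\<nu> (commut G g l)\<bar> \<le> Dt G L 1 \<nu>" by (rule s.Dt1_ub)
      then show "\<bar>\<nu> (commut G g l)\<bar> \<le> real_of_ereal (Dt G L 1 \<nu>)" using e by (metis ereal_less_eq(3))
    qed
    then show ?thesis using e by blast
  qed
  have i51: "P5 \<Longrightarrow> P1"
  proof -
    assume P5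
    then obtain C where C: "\<forall>g l. g \<in> carrier G \<longrightarrow> l \<in> L \<longrightarrow> \<bar>\<nu> (commut G g l)\<bar> \<le> C" using i5C by blast
    show P1 unfolding P1_def by (rule s.ext_exists[of C]) (use C in blast)
  qed
  have i54: "P5 \<Longrightarrow> P4"
  proof -
    assume P5
    then obtain C where C: "\<forall>g l. g \<in> carrier G \<longrightarrow> l \<in> L \<longrightarrow> \<bar>\<nu> (commut G g l)\<bar> \<le> C"
      and Ce: "Dt G L 1 \<nu> = ereal C" using i5C by blast
    have a: "Dt G L 1 \<nu> \<le> defect G N \<nu>"
    proof -
      have "Dt G L 1 \<nu> \<le> ereal s.Dn"
        by (rule s.Dt1_lub) (rule s.comm_bound[of C], use C in blast, assumption+)
      then show ?thesis using defeq by simp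
    qed
    have b: "defect G N \<nu> \<le> Dt G L 1 \<nu>"
    proof -
      have cb: "\<forall>a\<in>N. \<forall>b\<in>N. \<bar>\<nu> (commut G a b)\<bar> \<le> C" using C s.Nc assms(4) by blast
      have "defect G N \<nu> \<le> ereal C"
        by (rule defect_lub) (rule bavard[OF s.Nloc cb], assumption+)
      then show ?thesis using Ce by simp
    qed
    show P4 unfolding P4_def using a b by (rule antisym)
  qed
  have "(P1 \<longleftrightarrow> P2) \<and> (P2 \<longleftrightarrow> P3) \<and> (P3 \<longleftrightarrow> P4) \<and> (P4 \<longleftrightarrow> P5)"
    using i12 i23 i35 i45 i51 i54 by blast
  then show ?thesis unfolding P1_def P2_def P3_def P4_def P5_def .
qed

end
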